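(* Let $E$ be a finite directed graph and $KE$ its path algebra. Then (i) $\mathrm{GKdim}(KE)=0$ if and only if $KE$ is finite-dimensional; (ii) if $0\neq\mathrm{GKdim}(KE)<\infty$, then $\mathrm{h}_{\mathrm{alg}}(KE)=0$ and $KE$ is infinite-dimensional.
   Context: A finite directed graph $E=(E^0,E^1,s,r)$ has finitely many vertices and edges, with source and range maps $s,r:E^1\to E^0$. Paths are finite sequences $e_1\cdots e_n$ of edges with $r(e_i)=s(e_{i+1})$; vertices are paths of length $0$. The path algebra $KE$ over a field $K$ has basis all paths with concatenation product (zero when not composable); its standard filtration $V_n$ is the span of paths of length $\le n$. $\mathrm{h}_{\mathrm{alg}}(KE)=0$ if $KE$ is finite-dimensional and $\limsup_n\frac1n\log\dim(V_n/V_{n-1})$ otherwise. $\mathrm{GKdim}(A)=\limsup_{n}\log\dim(V^n)/\log n$ for a finite-dimensional generating subspace $V$ of the algebra $A$, where $V^n$ is the span of products of at most $n$ elements of $V$ (and $\mathrm{GKdim}(A)=\infty$ if the growth is not polynomially bounded). *)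

theory Defs
  imports "HOL-Library.Function_Algebras" "HOL-Library.Liminf_Limsup" "HOL-Library.Extended_Real"
    Complex_Main "Graph_Theory.Digraph"
begin

text \<open>Finite directed graph E = (E^0, E^1, s, r): we use the Graph_Theory record
  pre_digraph with verts = E^0, arcs = E^1, tail = s, head = r, and the locale
  assumption fin_digraph (finitely many vertices and edges, loops and multiple
  edges allowed).

  A path is represented as a pair (v, es): start vertex v and a list of edges es.
  The vertex v (path of length 0) is (v, []).\<close>

type_synonym ('v,'e) gpath = "'v \<times> 'e list"

definition is_path :: "('v,'e) pre_digraph \<Rightarrow> ('v,'e) gpath \<Rightarrow> bool" where
  "is_path G p \<longleftrightarrow> fst p \<in> verts G \<and> set (snd p) \<subseteq> arcs G
     \<and> (snd p \<noteq> [] \<longrightarrow> tail G (hd (snd p)) = fst p)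
     \<and> (\<forall>i. Suc i < length (snd p) \<longrightarrow> head G (snd p ! i) = tail G (snd p ! Suc i))"

definition path_len :: "('v,'e) gpath \<Rightarrow> nat" where
  "path_len p = length (snd p)"

definition path_end :: "('v,'e) pre_digraph \<Rightarrow> ('v,'e) gpath \<Rightarrow> 'v" where
  "path_end G p = (if snd p = [] then fst p else head G (last (snd p)))"

text \<open>Concatenation of paths; None stands for the product being zero.\<close>
definition path_concat :: "('v,'e) pre_digraph \<Rightarrow> ('v,'e) gpath \<Rightarrow> ('v,'e) gpath \<Rightarrow> ('v,'e) gpath option" where
  "path_concat G p q = (if path_end G p = fst q then Some (fst p, snd p @ snd q) else None)"

text \<open>The path algebra KE: K-linear combinations of paths, i.e. finitely supported
  functions from paths to K (supported on paths of G).\<close>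

definition pscale :: "'k::field \<Rightarrow> (('v,'e) gpath \<Rightarrow> 'k) \<Rightarrow> (('v,'e) gpath \<Rightarrow> 'k)" where
  "pscale c f = (\<lambda>x. c * f x)"

definition supp :: "('a \<Rightarrow> 'k::zero) \<Rightarrow> 'a set" where
  "supp f = {x. f x \<noteq> 0}"

definition path_algebra :: "'k::field itself \<Rightarrow> ('v,'e) pre_digraph \<Rightarrow> (('v,'e) gpath \<Rightarrow> 'k) set" where
  "path_algebra _ G = {f. finite (supp f) \<and> supp f \<subseteq> {p. is_path G p}}"

definition basis_elt :: "'k::field itself \<Rightarrow> ('v,'e) gpath \<Rightarrow> (('v,'e) gpath \<Rightarrow> 'k)" where
  "basis_elt _ p = (\<lambda>q. if q = p then 1 else 0)"

definition pmult :: "('v,'e) pre_digraph \<Rightarrow> (('v,'e) gpath \<Rightarrow> 'k::field) \<Rightarrow> (('v,'e) gpath \<Rightarrow> 'k) \<Rightarrow> (('v,'e) gpath \<Rightarrow> 'k)" where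
  "pmult G f g = (\<lambda>p. \<Sum>(q,q') \<in> {(q,q'). q \<in> supp f \<and> q' \<in> supp g \<and> path_concat G q q' = Some p}. f q * g q')"

text \<open>The unit of KE (the sum of all vertices; E^0 is finite).\<close>
definition punit :: "'k::field itself \<Rightarrow> ('v,'e) pre_digraph \<Rightarrow> (('v,'e) gpath \<Rightarrow> 'k)" where
  "punit _ G = (\<lambda>p. if snd p = [] \<and> fst p \<in> verts G then 1 else 0)"

fun pprod :: "'k::field itself \<Rightarrow> ('v,'e) pre_digraph \<Rightarrow> (('v,'e) gpath \<Rightarrow> 'k) list \<Rightarrow> (('v,'e) gpath \<Rightarrow> 'k)" where
  "pprod K G [] = punit K G"
| "pprod K G (x # xs) = pmult G x (pprod K G xs)"

abbreviation kspan :: "(('v,'e) gpath \<Rightarrow> 'k::field) set \<Rightarrow> (('v,'e) gpath \<Rightarrow> 'k) set" where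
  "kspan S \<equiv> module.span pscale S"

abbreviation kdim :: "(('v,'e) gpath \<Rightarrow> 'k::field) set \<Rightarrow> nat" where
  "kdim S \<equiv> vector_space.dim pscale S"

definition fin_dim :: "(('v,'e) gpath \<Rightarrow> 'k::field) set \<Rightarrow> bool" where
  "fin_dim S \<longleftrightarrow> (\<exists>B. finite B \<and> S \<subseteq> kspan B)"

definition path_algebra_fin_dim :: "'k::field itself \<Rightarrow> ('v,'e) pre_digraph \<Rightarrow> bool" where
  "path_algebra_fin_dim K G \<longleftrightarrow> fin_dim (path_algebra K G)"

definition subspace_pow :: "'k::field itself \<Rightarrow> ('v,'e) pre_digraph \<Rightarrow> (('v,'e) gpath \<Rightarrow> 'k) set \<Rightarrow> nat \<Rightarrow> (('v,'e) gpath \<Rightarrow> 'k) set" where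
  "subspace_pow K G V n = kspan {pprod K G xs | xs. length xs \<le> n \<and> set xs \<subseteq> V}"

definition fd_generating :: "'k::field itself \<Rightarrow> ('v,'e) pre_digraph \<Rightarrow> (('v,'e) gpath \<Rightarrow> 'k) set \<Rightarrow> bool" where
  "fd_generating K G V \<longleftrightarrow> module.subspace pscale V \<and> V \<subseteq> path_algebra K G \<and> fin_dim V
     \<and> (\<Union>n. subspace_pow K G V n) = path_algebra K G"

definition GK_wrt :: "'k::field itself \<Rightarrow> ('v,'e) pre_digraph \<Rightarrow> (('v,'e) gpath \<Rightarrow> 'k) set \<Rightarrow> ereal" where
  "GK_wrt K G V = limsup (\<lambda>n. ereal (ln (real (kdim (subspace_pow K G V n))) / ln (real n)))"

definition GKdim :: "'k::field itself \<Rightarrow> ('v,'e) pre_digraph \<Rightarrow> ereal" where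
  "GKdim K G = GK_wrt K G (SOME V. fd_generating K G V)"

definition std_filt :: "'k::field itself \<Rightarrow> ('v,'e) pre_digraph \<Rightarrow> nat \<Rightarrow> (('v,'e) gpath \<Rightarrow> 'k) set" where
  "std_filt K G n = kspan {basis_elt K p | p. is_path G p \<and> path_len p \<le> n}"

definition filt_quot_dim :: "'k::field itself \<Rightarrow> ('v,'e) pre_digraph \<Rightarrow> nat \<Rightarrow> nat" where
  "filt_quot_dim K G n = (if n = 0 then kdim (std_filt K G 0)
      else kdim (std_filt K G n) - kdim (std_filt K G (n - 1)))"

definition h_alg :: "'k::field itself \<Rightarrow> ('v,'e) pre_digraph \<Rightarrow> ereal" where
  "h_alg K G = (if path_algebra_fin_dim K G then 0
     else limsup (\<lambda>n. ereal (ln (real (filt_quot_dim K G n)) / real n)))"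

end

theory Submission
  imports Defs "HOL-Real_Asymp.Real_Asymp"
begin

interpretation ps: vector_space "pscale :: 'k::field \<Rightarrow> (('v,'e) gpath \<Rightarrow> 'k) \<Rightarrow> _"
  by unfold_locales (auto simp: pscale_def fun_eq_iff algebra_simps)

definition pre :: "('v,'e) gpath \<Rightarrow> nat \<Rightarrow> ('v,'e) gpath" where
  "pre p i = (fst p, take i (snd p))"

definition suf :: "('v,'e) pre_digraph \<Rightarrow> ('v,'e) gpath \<Rightarrow> nat \<Rightarrow> ('v,'e) gpath" where
  "suf G p i = (path_end G (pre p i), drop i (snd p))"

lemma pmult_conv:
  "pmult G f g p = (\<Sum>i\<le>length (snd p). f (pre p i) * g (suf G p i))"
proof -
  let ?X = "{(q,q'). q \<in> supp f \<and> q' \<in> supp g \<and> path_concat G q q' = Some p}"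
  let ?I = "{i. i \<le> length (snd p) \<and> f (pre p i) \<noteq> 0 \<and> g (suf G p i) \<noteq> 0}"
  let ?h = "\<lambda>i. (pre p i, suf G p i)"
  have X: "?X = ?h ` ?I"
  proof (intro equalityI subsetI)
    fix x assume "x \<in> ?X"
    then obtain q q' where x: "x = (q,q')" and fq: "f q \<noteq> 0" and gq: "g q' \<noteq> 0"
      and e: "path_end G q = fst q'" and pq: "p = (fst q, snd q @ snd q')"
      by (auto simp: supp_def path_concat_def split: if_splits)
    let ?i = "length (snd q)"
    have 1: "pre p ?i = q" using pq by (simp add: pre_def)
    have 2: "suf G p ?i = q'" using pq e 1 by (simp add: suf_def)
    show "x \<in> ?h ` ?I" using 1 2 fq gq x pq by (intro image_eqI[of _ _ ?i]) auto
  next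
    fix x assume "x \<in> ?h ` ?I"
    then obtain i where i: "i \<le> length (snd p)" "f (pre p i) \<noteq> 0" "g (suf G p i) \<noteq> 0"
      and x: "x = ?h i" by auto
    have "path_concat G (pre p i) (suf G p i) = Some p"
      by (simp add: path_concat_def pre_def suf_def)
    then show "x \<in> ?X" using i x by (simp add: supp_def)
  qed
  have inj: "inj_on ?h ?I"
  proof (rule inj_onI)
    fix i j assume "i \<in> ?I" "j \<in> ?I" "?h i = ?h j"
    then have "length (take i (snd p)) = length (take j (snd p))" "i \<le> length (snd p)" "j \<le> length (snd p)"
      by (auto simp: pre_def)
    then show "i = j" by simp
  qed
  have "pmult G f g p = (\<Sum>(q,q')\<in>?X. f q * g q')" by (simp add: pmult_def)
  also have "\<dots> = (\<Sum>i\<in>?I. f (pre p i) * g (suf G p i))"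
    unfolding X by (subst sum.reindex[OF inj]) simp
  also have "\<dots> = (\<Sum>i\<le>length (snd p). f (pre p i) * g (suf G p i))"
    by (rule sum.mono_neutral_left) auto
  finally show ?thesis .
qed

lemma pmult_add_left: "pmult G (f + g) h = pmult G f h + pmult G g h"
  by (simp add: fun_eq_iff pmult_conv sum.distrib distrib_right)
lemma pmult_add_right: "pmult G h (f + g) = pmult G h f + pmult G h g"
  by (simp add: fun_eq_iff pmult_conv sum.distrib distrib_left)
lemma pmult_scale_left: "pmult G (pscale c f) h = pscale c (pmult G f h)"
  by (simp add: fun_eq_iff pmult_conv pscale_def sum_distrib_left mult.assoc)
lemma pmult_scale_right: "pmult G h (pscale c f) = pscale c (pmult G h f)"
  by (simp add: fun_eq_iff pmult_conv pscale_def sum_distrib_left algebra_simps)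
lemma pmult_zero_left: "pmult G 0 h = 0"
  by (simp add: fun_eq_iff pmult_conv)
lemma pmult_zero_right: "pmult G h 0 = 0"
  by (simp add: fun_eq_iff pmult_conv)

lemma len_pre: "i \<le> length (snd p) \<Longrightarrow> length (snd (pre p i)) = i"
  by (simp add: pre_def)
lemma len_suf: "length (snd (suf G p i)) = length (snd p) - i"
  by (simp add: suf_def)
lemma pre_pre: "i \<le> j \<Longrightarrow> pre (pre p j) i = pre p i"
  by (simp add: pre_def min_def)
lemma suf_pre: "i \<le> j \<Longrightarrow> suf G (pre p j) i = pre (suf G p i) (j - i)"
  by (simp add: suf_def pre_def min_def drop_take)

lemma path_end_pre_suf:
  assumes "i + l \<le> length (snd p)"
  shows "path_end G (pre (suf G p i) l) = path_end G (pre p (i + l))"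
proof (cases "l = 0")
  case True then show ?thesis by (simp add: pre_def suf_def path_end_def)
next
  case False
  have li: "l \<le> length (snd p) - i" using assms by simp
  have ne: "take l (drop i (snd p)) \<noteq> []" "take (i+l) (snd p) \<noteq> []" using assms False by auto
  have "last (take l (drop i (snd p))) = snd p ! (i + l - 1)"
    using assms False li by (simp add: last_conv_nth nth_drop min_def)
  moreover have "last (take (i+l) (snd p)) = snd p ! (i + l - 1)"
    using assms False ne(2) by (simp add: last_conv_nth min_absorb1)
  ultimately show ?thesis using ne by (simp add: pre_def suf_def path_end_def)
qed

lemma suf_suf: "i + l \<le> length (snd p) \<Longrightarrow> suf G (suf G p i) l = suf G p (i + l)"
  using path_end_pre_suf[of i l p G] by (simp add: suf_def add.commute)

lemma pmult_assoc:
  fixes f g h :: "('v,'e) gpath \<Rightarrow> 'k::field"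
  shows "pmult G (pmult G f g) h = pmult G f (pmult G g h)"
proof (rule ext)
  fix p :: "('v,'e) gpath"
  let ?n = "length (snd p)"
  define F where "F i l = f (pre p i) * g (pre (suf G p i) l) * h (suf G (suf G p i) l)" for i l
  have "pmult G (pmult G f g) h p = (\<Sum>j\<le>?n. \<Sum>i\<le>j. F i (j - i))"
  proof -
    have "pmult G (pmult G f g) h p = (\<Sum>j\<le>?n. (\<Sum>i\<le>j. f (pre (pre p j) i) * g (suf G (pre p j) i)) * h (suf G p j))"
      by (subst pmult_conv, intro sum.cong refl, simp add: pmult_conv len_pre)
    also have "\<dots> = (\<Sum>j\<le>?n. \<Sum>i\<le>j. F i (j - i))"
      by (intro sum.cong refl) (auto simp: sum_distrib_right F_def pre_pre suf_pre suf_suf intro!: sum.cong)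
    finally show ?thesis .
  qed
  also have "\<dots> = (\<Sum>(i,l)\<in>{(i,l). i + l \<le> ?n}. F i l)"
    by (rule sum.triangle_reindex_eq[symmetric])
  also have "{(i,l). i + l \<le> ?n} = Sigma {..?n} (\<lambda>i. {..?n - i})" by auto
  also have "(\<Sum>(i,l)\<in>Sigma {..?n} (\<lambda>i. {..?n - i}). F i l) = (\<Sum>i\<le>?n. \<Sum>l\<le>?n - i. F i l)"
    by (rule sum.Sigma[symmetric]) auto
  also have "\<dots> = pmult G f (pmult G g h) p"
    by (auto simp: pmult_conv len_suf F_def sum_distrib_left mult.assoc intro!: sum.cong)
  finally show "pmult G (pmult G f g) h p = pmult G f (pmult G g h) p" .
qed

lemma fun_sum_apply: "(sum h S) x = (\<Sum>y\<in>S. h y x)"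
  by (induct S rule: infinite_finite_induct) auto

lemma concat_pre_suf: "p = (fst (pre p i), snd (pre p i) @ snd (suf G p i))"
  by (simp add: pre_def suf_def)

lemma is_path_glue:
  assumes "is_path G (pre p i)" "is_path G (suf G p i)" "i \<le> length (snd p)"
  shows "is_path G p"
proof -
  let ?es = "snd p"
  from assms(1) have v: "fst p \<in> verts G" by (simp add: is_path_def pre_def)
  have arcs: "set ?es \<subseteq> arcs G"
  proof -
    have "set (take i ?es) \<subseteq> arcs G" "set (drop i ?es) \<subseteq> arcs G"
      using assms(1,2) by (auto simp: is_path_def pre_def suf_def)
    then show ?thesis by (metis append_take_drop_id set_append Un_subset_iff)
  qed
  have hd: "tail G (hd ?es) = fst p" if "?es \<noteq> []"
  proof (cases "i = 0")
    case True then show ?thesis using assms(2) that by (simp add: is_path_def suf_def pre_def path_end_def)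
  next
    case False then have "take i ?es \<noteq> []" using that by simp
    then show ?thesis using assms(1) False that by (simp add: is_path_def pre_def)
  qed
  have step: "head G (?es ! j) = tail G (?es ! Suc j)" if j: "Suc j < length ?es" for j
  proof -
    consider "Suc j < i" | "j \<ge> i" | "Suc j = i" by linarith
    then show ?thesis
    proof cases
      case 1
      with assms(1) have "head G (take i ?es ! j) = tail G (take i ?es ! Suc j)"
        using j by (auto simp: is_path_def pre_def)
      then show ?thesis using 1 by simp
    next
      case 2
      have "Suc (j - i) < length (drop i ?es)" using 2 j by simp
      with assms(2) have "head G (drop i ?es ! (j - i)) = tail G (drop i ?es ! Suc (j - i))"
        by (auto simp: is_path_def suf_def)
      then show ?thesis using 2 j by (simp add: Suc_diff_le)
    next
      case 3
      have "?es \<noteq> []" using j by auto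
      then have ne: "take i ?es \<noteq> []" using 3 by simp
      have ij: "i - 1 = j" using 3 by simp
      have e: "path_end G (pre p i) = head G (?es ! j)"
        using 3 j ne ij by (simp add: path_end_def pre_def last_conv_nth min_absorb1)
      have "drop i ?es \<noteq> []" using 3 j by simp
      then have "tail G (hd (drop i ?es)) = path_end G (pre p i)"
        using assms(2) by (simp add: is_path_def suf_def)
      moreover have "hd (drop i ?es) = ?es ! Suc j" using 3 j by (simp add: hd_drop_conv_nth)
      ultimately show ?thesis using e by simp
    qed
  qed
  show ?thesis using v arcs hd step by (simp add: is_path_def)
qed

lemma path_end_in_verts:
  assumes "wf_digraph G" "is_path G p"
  shows "path_end G p \<in> verts G"
proof (cases "snd p = []")
  case True then show ?thesis using assms by (simp add: path_end_def is_path_def)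
next
  case False
  then have "last (snd p) \<in> arcs G" using assms(2) by (auto simp: is_path_def)
  then show ?thesis using False assms(1) by (simp add: path_end_def wf_digraph.head_in_verts)
qed

lemma pmult_supp:
  assumes "p \<in> supp (pmult G f g)"
  obtains i where "i \<le> length (snd p)" "pre p i \<in> supp f" "suf G p i \<in> supp g"
proof -
  from assms obtain i where "i \<in> {..length (snd p)}" "f (pre p i) * g (suf G p i) \<noteq> 0"
    unfolding pmult_conv supp_def by (auto elim: sum.not_neutral_contains_not_neutral)
  then show ?thesis using that by (auto simp: supp_def)
qed

definition Alen :: "'k::field itself \<Rightarrow> ('v,'e) pre_digraph \<Rightarrow> nat \<Rightarrow> (('v,'e) gpath \<Rightarrow> 'k) set" where
  "Alen K G n = {f \<in> path_algebra K G. \<forall>p\<in>supp f. path_len p \<le> n}"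

lemma supp_pmult_sub:
  "supp (pmult G f g) \<subseteq> (\<lambda>(q,q'). (fst q, snd q @ snd q')) ` (supp f \<times> supp g)"
proof
  fix p assume "p \<in> supp (pmult G f g)"
  then obtain i where "pre p i \<in> supp f" "suf G p i \<in> supp g" by (rule pmult_supp)
  then show "p \<in> (\<lambda>(q,q'). (fst q, snd q @ snd q')) ` (supp f \<times> supp g)"
    by (intro image_eqI[where x="(pre p i, suf G p i)"]) (auto simp: pre_def suf_def)
qed

lemma pmult_in_A:
  assumes "f \<in> path_algebra K G" "g \<in> path_algebra K G"
  shows "pmult G f g \<in> path_algebra K G"
proof -
  have "finite (supp (pmult G f g))"
    using assms by (intro finite_subset[OF supp_pmult_sub]) (auto simp: path_algebra_def)
  moreover have "is_path G p" if "p \<in> supp (pmult G f g)" for p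
  proof -
    from that obtain i where "i \<le> length (snd p)" "pre p i \<in> supp f" "suf G p i \<in> supp g" by (rule pmult_supp)
    then show ?thesis using assms by (intro is_path_glue[of G p i]) (auto simp: path_algebra_def)
  qed
  ultimately show ?thesis by (auto simp: path_algebra_def)
qed

lemma pmult_in_Alen:
  assumes "f \<in> Alen K G a" "g \<in> Alen K G b"
  shows "pmult G f g \<in> Alen K G (a + b)"
proof -
  have "pmult G f g \<in> path_algebra K G" using assms pmult_in_A by (auto simp: Alen_def)
  moreover have "path_len p \<le> a + b" if "p \<in> supp (pmult G f g)" for p
  proof -
    from that obtain i where i: "i \<le> length (snd p)" "pre p i \<in> supp f" "suf G p i \<in> supp g" by (rule pmult_supp)
    then have "path_len (pre p i) \<le> a" "path_len (suf G p i) \<le> b" using assms by (auto simp: Alen_def)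
    then show ?thesis using i(1) by (simp add: path_len_def pre_def suf_def)
  qed
  ultimately show ?thesis by (auto simp: Alen_def)
qed

lemma punit_in_Alen:
  assumes "fin_digraph G"
  shows "punit K G \<in> Alen K G 0"
proof -
  have "supp (punit K G) \<subseteq> (\<lambda>v. (v, [])) ` verts G"
    by (auto simp: supp_def punit_def split: if_splits)
  moreover have "finite (verts G)" using assms by (simp add: fin_digraph.finite_verts)
  ultimately have "finite (supp (punit K G))" by (meson finite_imageI finite_subset)
  moreover have "\<forall>p\<in>supp (punit K G). is_path G p \<and> path_len p \<le> 0"
    by (auto simp: supp_def punit_def is_path_def path_len_def split: if_splits)
  ultimately show ?thesis by (auto simp: Alen_def path_algebra_def)
qed

lemma punit_left:
  fixes g :: "('v,'e) gpath \<Rightarrow> 'k::field"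
  assumes "g \<in> path_algebra K G"
  shows "pmult G (punit K G) g = g"
proof (rule ext)
  fix p :: "('v,'e) gpath"
  have "pmult G (punit K G) g p = punit K G (pre p 0) * g (suf G p 0)
      + (\<Sum>i\<in>{..length (snd p)} - {0}. punit K G (pre p i) * g (suf G p i))"
    unfolding pmult_conv by (rule sum.remove) auto
  also have "(\<Sum>i\<in>{..length (snd p)} - {0}. punit K G (pre p i) * g (suf G p i)) = 0"
    by (rule sum.neutral) (auto simp: punit_def pre_def)
  also have "punit K G (pre p 0) * g (suf G p 0) = g p"
    using assms by (cases "g p = 0") (auto simp: punit_def pre_def suf_def path_end_def path_algebra_def supp_def is_path_def)
  finally show "pmult G (punit K G) g p = g p" by simp
qed

lemma punit_right:
  fixes g :: "('v,'e) gpath \<Rightarrow> 'k::field"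
  assumes "g \<in> path_algebra K G" "wf_digraph G"
  shows "pmult G g (punit K G) = g"
proof (rule ext)
  fix p :: "('v,'e) gpath"
  let ?n = "length (snd p)"
  have "pmult G g (punit K G) p = g (pre p ?n) * punit K G (suf G p ?n)
      + (\<Sum>i\<in>{.. ?n} - {?n}. g (pre p i) * punit K G (suf G p i))"
    unfolding pmult_conv by (rule sum.remove) auto
  also have "(\<Sum>i\<in>{.. ?n} - {?n}. g (pre p i) * punit K G (suf G p i)) = 0"
    by (rule sum.neutral) (auto simp: punit_def suf_def)
  also have "g (pre p ?n) * punit K G (suf G p ?n) = g p"
  proof (cases "g p = 0")
    case True then show ?thesis by (simp add: pre_def)
  next
    case False
    then have "is_path G p" using assms(1) by (auto simp: path_algebra_def supp_def)
    then have "path_end G p \<in> verts G" using assms(2) path_end_in_verts by blast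
    then show ?thesis by (simp add: pre_def suf_def punit_def)
  qed
  finally show "pmult G g (punit K G) p = g p" by simp
qed

lemma pmult_delta_edge:
  fixes v :: 'v and e :: 'e and K :: "'k::field itself"
  shows "pmult G (basis_elt K (v,[e])) (basis_elt K (head G e, es)) = basis_elt K (v, e # es)"
proof (rule ext)
  fix r :: "('v,'e) gpath"
  have tm: "basis_elt K (v,[e]) (pre r i) * basis_elt K (head G e, es) (suf G r i)
      = (if i = 1 \<and> r = (v, e#es) then 1 else 0)" if i: "i \<le> length (snd r)" for i
  proof (cases "pre r i = (v,[e]) \<and> suf G r i = (head G e, es)")
    case True
    then have "i = 1" using len_pre[OF i] by auto
    moreover have "r = (v, e#es)" using True concat_pre_suf[of r i G] by simp
    ultimately show ?thesis using True by (simp add: basis_elt_def)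
  next
    case False
    have "\<not> (i = 1 \<and> r = (v, e#es))"
    proof
      assume "i = 1 \<and> r = (v, e#es)"
      then have "pre r i = (v,[e]) \<and> suf G r i = (head G e, es)"
        by (simp add: pre_def suf_def path_end_def)
      with False show False by simp
    qed
    then show ?thesis using False by (auto simp: basis_elt_def)
  qed
  have "pmult G (basis_elt K (v,[e])) (basis_elt K (head G e, es)) r
      = (\<Sum>i\<le>length (snd r). if i = 1 \<and> r = (v, e#es) then 1 else 0)"
    unfolding pmult_conv by (rule sum.cong) (auto simp: tm)
  also have "\<dots> = basis_elt K (v, e#es) r"
    by (cases "r = (v, e#es)") (auto simp: basis_elt_def simp del: sum.atMost_Suc)
  finally show "pmult G (basis_elt K (v,[e])) (basis_elt K (head G e, es)) r = basis_elt K (v, e # es) r" .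
qed

lemma decomp:
  assumes "finite (supp f)"
  shows "f = (\<Sum>p\<in>supp f. pscale (f p) (basis_elt K p))"
proof (rule ext)
  fix x
  have "(\<Sum>p\<in>supp f. pscale (f p) (basis_elt K p)) x = (\<Sum>p\<in>supp f. if p = x then f x else 0)"
    by (auto simp: fun_sum_apply pscale_def basis_elt_def intro!: sum.cong)
  also have "\<dots> = f x" using assms by (auto simp: supp_def)
  finally show "f x = (\<Sum>p\<in>supp f. pscale (f p) (basis_elt K p)) x" by simp
qed

lemma in_span_decomp:
  assumes "finite (supp f)"
  shows "f \<in> kspan (basis_elt K ` supp f)"
proof -
  have "(\<Sum>p\<in>supp f. pscale (f p) (basis_elt K p)) \<in> kspan (basis_elt K ` supp f)"
    by (rule ps.span_sum, rule ps.span_scale, rule ps.span_base) auto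
  then show ?thesis by (subst (asm) decomp[OF assms, symmetric])
qed

lemma supp_add: "supp (f + g) \<subseteq> supp f \<union> supp (g :: 'a \<Rightarrow> 'k::field)"
  by (auto simp: supp_def)
lemma supp_scale: "supp (pscale c f) \<subseteq> supp (f :: ('v,'e) gpath \<Rightarrow> 'k::field)"
  by (auto simp: supp_def pscale_def)
lemma supp_zero: "supp (0 :: 'a \<Rightarrow> 'k::field) = {}"
  by (auto simp: supp_def)
lemma supp_delta: "supp (basis_elt K p) = {p}"
  by (auto simp: supp_def basis_elt_def)

lemma subspace_A: "ps.subspace (path_algebra K G)"
proof (rule ps.subspaceI)
  show "0 \<in> path_algebra K G" by (simp add: path_algebra_def supp_zero)
  fix x y assume "x \<in> path_algebra K G" "y \<in> path_algebra K G"
  then show "x + y \<in> path_algebra K G"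
    using supp_add[of x y] unfolding path_algebra_def by (auto intro: finite_subset)
next
  fix c x assume "x \<in> path_algebra K G"
  then show "pscale c x \<in> path_algebra K G"
    using supp_scale[of c x] unfolding path_algebra_def by (auto intro: finite_subset)
qed

lemma subspace_Alen: "ps.subspace (Alen K G n)"
proof (rule ps.subspaceI)
  show "0 \<in> Alen K G n" by (simp add: Alen_def path_algebra_def supp_zero)
  fix x y assume "x \<in> Alen K G n" "y \<in> Alen K G n"
  then show "x + y \<in> Alen K G n"
    using supp_add[of x y] ps.subspace_add[OF subspace_A] unfolding Alen_def by auto
next
  fix c x assume "x \<in> Alen K G n"
  then show "pscale c x \<in> Alen K G n"
    using supp_scale[of c x] ps.subspace_scale[OF subspace_A] unfolding Alen_def by auto
qed

lemma std_filt_eq: "std_filt K G n = Alen K G n"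
proof
  show "std_filt K G n \<subseteq> Alen K G n"
    unfolding std_filt_def
    by (rule ps.span_minimal[OF _ subspace_Alen])
       (auto simp: Alen_def path_algebra_def supp_delta)
  show "Alen K G n \<subseteq> std_filt K G n"
  proof
    fix f assume f: "f \<in> Alen K G n"
    then have "finite (supp f)" by (simp add: Alen_def path_algebra_def)
    then have "f \<in> kspan (basis_elt K ` supp f)" by (rule in_span_decomp)
    also have "\<dots> \<subseteq> std_filt K G n"
      unfolding std_filt_def using f by (intro ps.span_mono) (auto simp: Alen_def path_algebra_def)
    finally show "f \<in> std_filt K G n" .
  qed
qed

lemma finite_paths:
  assumes "fin_digraph G"
  shows "finite {p. is_path G p \<and> path_len p \<le> n}"
proof -
  have "{p. is_path G p \<and> path_len p \<le> n} \<subseteq> verts G \<times> {es. set es \<subseteq> arcs G \<and> length es \<le> n}"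
    by (auto simp: is_path_def path_len_def)
  moreover have "finite (verts G \<times> {es. set es \<subseteq> arcs G \<and> length es \<le> n})"
    using assms by (intro finite_cartesian_product finite_lists_length_le)
      (auto simp: fin_digraph.finite_verts fin_digraph.finite_arcs)
  ultimately show ?thesis by (rule finite_subset)
qed

lemma fin_wf: "fin_digraph G \<Longrightarrow> wf_digraph G"
  by (rule fin_digraph.axioms(1))

lemma spow_subspace: "ps.subspace (subspace_pow K G V n)"
  by (simp add: subspace_pow_def)

lemma spow_mono: "a \<le> b \<Longrightarrow> subspace_pow K G V a \<subseteq> subspace_pow K G V b"
  unfolding subspace_pow_def by (rule ps.span_mono) auto

lemma spow_base: "length xs \<le> n \<Longrightarrow> set xs \<subseteq> V \<Longrightarrow> pprod K G xs \<in> subspace_pow K G V n"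
  unfolding subspace_pow_def by (rule ps.span_base) auto

lemma A_of_Alen: "Alen K G n \<subseteq> path_algebra K G"
  by (auto simp: Alen_def)

lemma pprod_in_A:
  assumes "V \<subseteq> path_algebra K G" "fin_digraph G" "set xs \<subseteq> V"
  shows "pprod K G xs \<in> path_algebra K G"
  using assms(3)
proof (induct xs)
  case Nil then show ?case using punit_in_Alen[OF assms(2), of K] A_of_Alen[of K G 0] by auto
next
  case (Cons x xs) then show ?case using assms(1) by (auto intro: pmult_in_A)
qed

lemma pprod_append:
  assumes "V \<subseteq> path_algebra K G" "fin_digraph G" "set xs \<subseteq> V" "set ys \<subseteq> V"
  shows "pmult G (pprod K G xs) (pprod K G ys) = pprod K G (xs @ ys)"
  using assms(3)
proof (induct xs)
  case Nil then show ?case using punit_left[OF pprod_in_A[OF assms(1,2,4)]] by simp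
next
  case (Cons x xs) then show ?case by (simp add: pmult_assoc)
qed

lemma spow_mult:
  assumes V: "V \<subseteq> path_algebra K G" and G: "fin_digraph G"
    and x: "x \<in> subspace_pow K G V a" and y: "y \<in> subspace_pow K G V b"
  shows "pmult G x y \<in> subspace_pow K G V (a + b)"
proof -
  have gen: "pmult G (pprod K G xs) y \<in> subspace_pow K G V (a + b)"
    if xs: "length xs \<le> a" "set xs \<subseteq> V" for xs
  proof (rule ps.span_induct[OF y[unfolded subspace_pow_def],
        where P="\<lambda>y. pmult G (pprod K G xs) y \<in> subspace_pow K G V (a + b)"])
    show "ps.subspace {y. pmult G (pprod K G xs) y \<in> subspace_pow K G V (a + b)}"
      by (rule ps.subspaceI)
        (auto simp: pmult_zero_right pmult_add_right pmult_scale_right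
          intro: ps.subspace_0[OF spow_subspace] ps.subspace_add[OF spow_subspace] ps.subspace_scale[OF spow_subspace])
  next
    fix z assume "z \<in> {pprod K G ys |ys. length ys \<le> b \<and> set ys \<subseteq> V}"
    then obtain ys where ys: "z = pprod K G ys" "length ys \<le> b" "set ys \<subseteq> V" by blast
    then have "pmult G (pprod K G xs) z = pprod K G (xs @ ys)"
      using pprod_append[OF V G xs(2)] by simp
    also have "\<dots> \<in> subspace_pow K G V (a + b)"
      using xs ys by (intro spow_base) auto
    finally show "pmult G (pprod K G xs) z \<in> subspace_pow K G V (a + b)" .
  qed
  show ?thesis
  proof (rule ps.span_induct[OF x[unfolded subspace_pow_def],
        where P="\<lambda>x. pmult G x y \<in> subspace_pow K G V (a + b)"])
    show "ps.subspace {x. pmult G x y \<in> subspace_pow K G V (a + b)}"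
      by (rule ps.subspaceI)
        (auto simp: pmult_zero_left pmult_add_left pmult_scale_left
          intro: ps.subspace_0[OF spow_subspace] ps.subspace_add[OF spow_subspace] ps.subspace_scale[OF spow_subspace])
  next
    fix z assume "z \<in> {pprod K G xs |xs. length xs \<le> a \<and> set xs \<subseteq> V}"
    then show "pmult G z y \<in> subspace_pow K G V (a + b)" using gen by blast
  qed
qed

lemma is_path_tl:
  assumes "is_path G (v, e # es)" "wf_digraph G"
  shows "is_path G (head G e, es)" "e \<in> arcs G" "tail G e = v"
proof -
  have all: "\<forall>i. Suc i < length (e#es) \<longrightarrow> head G ((e#es)!i) = tail G ((e#es)! Suc i)"
    and ar: "set (e#es) \<subseteq> arcs G" and t: "tail G e = v"
    using assms(1) by (auto simp: is_path_def)
  show "e \<in> arcs G" "tail G e = v" using ar t by auto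
  have "head G e \<in> verts G" using ar assms(2) by (simp add: wf_digraph.head_in_verts)
  moreover have "tail G (hd es) = head G e" if "es \<noteq> []"
    using all[rule_format, of 0] that by (simp add: hd_conv_nth)
  moreover have "head G (es ! i) = tail G (es ! Suc i)" if "Suc i < length es" for i
    using all[rule_format, of "Suc i"] that by simp
  ultimately show "is_path G (head G e, es)" using ar by (simp add: is_path_def)
qed

lemma delta_in_spow:
  assumes V: "V \<subseteq> path_algebra K G" and G: "fin_digraph G"
    and hv: "\<And>v. v \<in> verts G \<Longrightarrow> basis_elt K (v,[]) \<in> subspace_pow K G V k"
    and he: "\<And>e. e \<in> arcs G \<Longrightarrow> basis_elt K (tail G e,[e]) \<in> subspace_pow K G V k"
  shows "is_path G (v, es) \<Longrightarrow> basis_elt K (v, es) \<in> subspace_pow K G V (k * (length es + 1))"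
proof (induct es arbitrary: v)
  case Nil then show ?case using hv by (simp add: is_path_def)
next
  case (Cons e es)
  note p = is_path_tl[OF Cons.prems fin_wf[OF G]]
  have "basis_elt K (head G e, es) \<in> subspace_pow K G V (k * (length es + 1))"
    using p(1) by (rule Cons.hyps)
  then have "pmult G (basis_elt K (v,[e])) (basis_elt K (head G e, es)) \<in> subspace_pow K G V (k + k * (length es + 1))"
    using spow_mult[OF V G he[OF p(2), unfolded p(3)]] by blast
  then show ?case by (simp add: pmult_delta_edge algebra_simps)
qed

lemma delta_in_A: "is_path G p \<Longrightarrow> basis_elt K p \<in> path_algebra K G"
  by (simp add: path_algebra_def supp_delta)

lemma finite_bound:
  assumes "finite S" "\<forall>x\<in>S. \<exists>n. x \<in> F n" "\<And>a b. a \<le> b \<Longrightarrow> F a \<subseteq> F (b::nat)"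
  shows "\<exists>k\<ge>1. \<forall>x\<in>S. x \<in> F k"
proof -
  from assms(2) obtain nf where nf: "\<forall>x\<in>S. x \<in> F (nf x)" by metis
  let ?k = "Max (insert 1 (nf ` S))"
  have "nf x \<le> ?k" if "x \<in> S" for x using assms(1) that by simp
  then have "\<forall>x\<in>S. x \<in> F ?k" using nf assms(3) by blast
  moreover have "?k \<ge> 1" using assms(1) by simp
  ultimately show ?thesis by blast
qed

lemma exists_fd_gen:
  fixes K :: "'k::field itself"
  assumes G: "fin_digraph G"
  shows "\<exists>V. fd_generating K G V"
proof -
  let ?V = "std_filt K G 1"
  have VA: "?V \<subseteq> path_algebra K G" by (auto simp: std_filt_eq Alen_def)
  have V1: "?V \<subseteq> subspace_pow K G ?V 1"
  proof
    fix x assume x: "x \<in> ?V"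
    have "pprod K G [x] \<in> subspace_pow K G ?V 1" using x by (intro spow_base) auto
    moreover have "pprod K G [x] = x" using punit_right[OF VA[THEN subsetD, OF x] fin_wf[OF G]] by simp
    ultimately show "x \<in> subspace_pow K G ?V 1" by simp
  qed
  have inV: "basis_elt K p \<in> ?V" if "is_path G p" "path_len p \<le> 1" for p
    unfolding std_filt_def using that by (intro ps.span_base) blast
  have deltas: "basis_elt K (v, es) \<in> subspace_pow K G ?V (1 * (length es + 1))" if "is_path G (v, es)" for v es
  proof (rule delta_in_spow[OF VA G _ _ that])
    fix v assume "v \<in> verts G"
    then show "basis_elt K (v, []) \<in> subspace_pow K G ?V 1"
      using V1 inV[of "(v,[])"] by (auto simp: is_path_def path_len_def)
  next
    fix e assume "e \<in> arcs G"
    then have "is_path G (tail G e, [e])" using fin_wf[OF G] by (simp add: is_path_def wf_digraph.tail_in_verts)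
    then show "basis_elt K (tail G e, [e]) \<in> subspace_pow K G ?V 1"
      using V1 inV[of "(tail G e, [e])"] by (auto simp: path_len_def)
  qed
  have "(\<Union>n. subspace_pow K G ?V n) = path_algebra K G"
  proof
    show "(\<Union>n. subspace_pow K G ?V n) \<subseteq> path_algebra K G"
    proof (rule UN_least)
      fix n show "subspace_pow K G ?V n \<subseteq> path_algebra K G"
        unfolding subspace_pow_def
        by (rule ps.span_minimal[OF _ subspace_A]) (use pprod_in_A[OF VA G] in blast)
    qed
  next
    show "path_algebra K G \<subseteq> (\<Union>n. subspace_pow K G ?V n)"
    proof
      fix f assume f: "f \<in> path_algebra K G"
      then have fin: "finite (supp f)" and paths: "\<forall>p\<in>supp f. is_path G p"
        by (auto simp: path_algebra_def)
      then obtain N where N: "\<forall>n\<in>path_len ` supp f. n \<le> N"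
        using finite_nat_set_iff_bounded_le by blast
      have "basis_elt K ` supp f \<subseteq> subspace_pow K G ?V (N + 1)"
      proof
        fix x assume "x \<in> basis_elt K ` supp f"
        then obtain p where p: "p \<in> supp f" "x = basis_elt K p" by blast
        have "x \<in> subspace_pow K G ?V (length (snd p) + 1)"
          using deltas[of "fst p" "snd p"] paths p by simp
        moreover have "length (snd p) + 1 \<le> N + 1" using N p by (auto simp: path_len_def)
        ultimately show "x \<in> subspace_pow K G ?V (N + 1)" using spow_mono by blast
      qed
      then have "kspan (basis_elt K ` supp f) \<subseteq> subspace_pow K G ?V (N + 1)"
        by (rule ps.span_minimal[OF _ spow_subspace])
      then show "f \<in> (\<Union>n. subspace_pow K G ?V n)" using in_span_decomp[OF fin, of K] by blast
    qed
  qed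
  moreover have "fin_dim ?V"
  proof -
    have "?V = kspan (basis_elt K ` {p. is_path G p \<and> path_len p \<le> 1})"
      unfolding std_filt_def by (rule arg_cong[where f=kspan]) blast
    then show ?thesis unfolding fin_dim_def using finite_paths[OF G] by blast
  qed
  moreover have "ps.subspace ?V" by (simp add: std_filt_def)
  ultimately show ?thesis unfolding fd_generating_def using VA by blast
qed

lemma gen_bound:
  assumes G: "fin_digraph G" and fd: "fd_generating K G V"
  obtains k where "k \<ge> 1" "\<And>p. is_path G p \<Longrightarrow> basis_elt K p \<in> subspace_pow K G V (k * (path_len p + 1))"
proof -
  have VA: "V \<subseteq> path_algebra K G" and U: "(\<Union>n. subspace_pow K G V n) = path_algebra K G"
    using fd by (auto simp: fd_generating_def)
  let ?S = "basis_elt K ` {p. is_path G p \<and> path_len p \<le> 1}"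
  have "\<forall>x\<in>?S. \<exists>n. x \<in> subspace_pow K G V n" using U delta_in_A by blast
  then obtain k where k: "k \<ge> 1" "\<forall>x\<in>?S. x \<in> subspace_pow K G V k"
    using finite_bound[of ?S "subspace_pow K G V"] finite_paths[OF G] spow_mono by blast
  have "basis_elt K (v, es) \<in> subspace_pow K G V (k * (length es + 1))" if "is_path G (v, es)" for v es
  proof (rule delta_in_spow[OF VA G _ _ that])
    fix v assume "v \<in> verts G"
    then have "(v,[]) \<in> {p. is_path G p \<and> path_len p \<le> 1}" by (simp add: is_path_def path_len_def)
    then show "basis_elt K (v,[]) \<in> subspace_pow K G V k" using k(2) by blast
  next
    fix e assume "e \<in> arcs G"
    then have "(tail G e, [e]) \<in> {p. is_path G p \<and> path_len p \<le> 1}"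
      using fin_wf[OF G] by (simp add: is_path_def path_len_def wf_digraph.tail_in_verts)
    then show "basis_elt K (tail G e,[e]) \<in> subspace_pow K G V k" using k(2) by blast
  qed
  then show ?thesis using that k(1) by (metis path_len_def prod.collapse)
qed

lemma spow_fin:
  assumes G: "fin_digraph G" and fd: "fd_generating K G V"
  shows "\<exists>F. finite F \<and> subspace_pow K G V m \<subseteq> kspan F"
proof -
  have VA: "V \<subseteq> path_algebra K G" and fdV: "fin_dim V" using fd by (auto simp: fd_generating_def)
  obtain B where B: "finite B" "V \<subseteq> kspan B" using fdV by (auto simp: fin_dim_def)
  obtain B' where B': "B' \<subseteq> V" "ps.independent B'" "V \<subseteq> kspan B'" by (rule ps.basis_exists)
  have finB': "finite B'" using ps.independent_span_bound[OF B(1) B'(2)] B'(1) B(2) by blast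
  have "finite (\<Union> (supp ` B'))" using finB' B'(1) VA by (auto simp: path_algebra_def)
  then have "finite (path_len ` \<Union> (supp ` B'))" by simp
  then obtain M where M: "\<forall>n\<in>path_len ` \<Union> (supp ` B'). n \<le> M"
    using finite_nat_set_iff_bounded_le by blast
  have "B' \<subseteq> Alen K G M" using B'(1) VA M by (auto simp: Alen_def)
  then have VM: "V \<subseteq> Alen K G M" using B'(3) ps.span_minimal[OF _ subspace_Alen] by blast
  have Alen_mono: "Alen K G a \<subseteq> Alen K G b" if "a \<le> b" for a b using that by (auto simp: Alen_def)
  have pp: "pprod K G xs \<in> Alen K G (M * length xs)" if "set xs \<subseteq> V" for xs
    using that
  proof (induct xs)
    case Nil then show ?case using punit_in_Alen[OF G] by simp
  next
    case (Cons x xs) then show ?case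
      using pmult_in_Alen[of x K G M "pprod K G xs" "M * length xs"] VM by auto
  qed
  have "subspace_pow K G V m \<subseteq> Alen K G (M * m)"
    unfolding subspace_pow_def
  proof (rule ps.span_minimal[OF _ subspace_Alen])
    show "{pprod K G xs |xs. length xs \<le> m \<and> set xs \<subseteq> V} \<subseteq> Alen K G (M * m)"
    proof
      fix x assume "x \<in> {pprod K G xs |xs. length xs \<le> m \<and> set xs \<subseteq> V}"
      then obtain xs where xs: "x = pprod K G xs" "length xs \<le> m" "set xs \<subseteq> V" by blast
      have "M * length xs \<le> M * m" using xs(2) by simp
      then show "x \<in> Alen K G (M * m)" using pp[OF xs(3)] Alen_mono xs(1) by blast
    qed
  qed
  also have "\<dots> = kspan (basis_elt K ` {p. is_path G p \<and> path_len p \<le> M * m})"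
    unfolding std_filt_eq[symmetric] std_filt_def by (rule arg_cong[where f=kspan]) blast
  finally show ?thesis using finite_paths[OF G] by blast
qed

lemma dim_mono_fin:
  assumes "X \<subseteq> kspan Y" "Y \<subseteq> kspan F" "finite F"
  shows "kdim X \<le> kdim Y"
proof -
  obtain BX where BX: "BX \<subseteq> X" "ps.independent BX" "X \<subseteq> kspan BX" "card BX = kdim X"
    by (rule ps.basis_exists)
  obtain BY where BY: "BY \<subseteq> Y" "ps.independent BY" "Y \<subseteq> kspan BY" "card BY = kdim Y"
    by (rule ps.basis_exists)
  have "finite BY" using ps.independent_span_bound[OF assms(3) BY(2)] BY(1) assms(2) by blast
  have "kspan Y \<subseteq> kspan BY" using BY(3) ps.span_minimal[OF _ ps.subspace_span] by blast
  then have "BX \<subseteq> kspan BY" using BX(1) assms(1) by blast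
  then have "card BX \<le> card BY" using ps.independent_span_bound[OF \<open>finite BY\<close> BX(2)] by blast
  then show ?thesis using BX(4) BY(4) by simp
qed

lemma indep_le_dim:
  assumes "ps.independent D" "D \<subseteq> kspan Y" "Y \<subseteq> kspan F" "finite F"
  shows "card D \<le> kdim Y"
proof -
  obtain BY where BY: "BY \<subseteq> Y" "ps.independent BY" "Y \<subseteq> kspan BY" "card BY = kdim Y"
    by (rule ps.basis_exists)
  have "finite BY" using ps.independent_span_bound[OF assms(4) BY(2)] BY(1) assms(3) by blast
  have "kspan Y \<subseteq> kspan BY" using BY(3) ps.span_minimal[OF _ ps.subspace_span] by blast
  then have "D \<subseteq> kspan BY" using assms(2) by blast
  then have "card D \<le> card BY" using ps.independent_span_bound[OF \<open>finite BY\<close> assms(1)] by blast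
  then show ?thesis using BY(4) by simp
qed

lemma delta_inj: "inj (basis_elt K)"
proof (rule injI)
  fix x y assume "basis_elt K x = basis_elt K y"
  then have "basis_elt K x x = basis_elt K y x" by simp
  then show "x = y" by (simp add: basis_elt_def split: if_splits)
qed

lemma delta_indep:
  fixes K :: "'k::field itself" and Q :: "('v,'e) gpath set"
  assumes "finite Q"
  shows "ps.independent (basis_elt K ` Q)"
proof (rule ps.independent_if_scalars_zero)
  show "finite (basis_elt K ` Q)" using assms by simp
next
  fix u x assume s: "(\<Sum>x\<in>basis_elt K ` Q. pscale (u x) x) = 0" and x: "x \<in> basis_elt K ` Q"
  then obtain q where q: "q \<in> Q" "x = basis_elt K q" by blast
  have "0 = (\<Sum>y\<in>basis_elt K ` Q. pscale (u y) y) q" using s by simp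
  also have "\<dots> = (\<Sum>q'\<in>Q. u (basis_elt K q') * basis_elt K q' q)"
    by (simp add: fun_sum_apply pscale_def sum.reindex[OF inj_on_subset[OF delta_inj subset_UNIV]])
  also have "\<dots> = (\<Sum>q'\<in>Q. if q' = q then u (basis_elt K q) else 0)"
    by (rule sum.cong) (auto simp: basis_elt_def)
  also have "\<dots> = u (basis_elt K q)" using q assms by simp
  finally show "u x = 0" using q by simp
qed

lemma is_path_pre: "is_path G p \<Longrightarrow> is_path G (pre p i)"
  by (auto simp: is_path_def pre_def dest: in_set_takeD)

lemma not_fin_dim_long_paths:
  fixes K :: "'k::field itself"
  assumes G: "fin_digraph G" and nf: "\<not> path_algebra_fin_dim K G"
  shows "\<exists>p. is_path G p \<and> path_len p \<ge> n"
proof (rule ccontr)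
  assume "\<not> ?thesis"
  then have sub: "{p. is_path G p} \<subseteq> {p. is_path G p \<and> path_len p \<le> n}" by force
  have "path_algebra K G \<subseteq> kspan (basis_elt K ` {p. is_path G p \<and> path_len p \<le> n})"
  proof
    fix f assume f: "f \<in> path_algebra K G"
    then have "f \<in> kspan (basis_elt K ` supp f)" by (intro in_span_decomp) (simp add: path_algebra_def)
    also have "\<dots> \<subseteq> kspan (basis_elt K ` {p. is_path G p \<and> path_len p \<le> n})"
      using f sub by (intro ps.span_mono image_mono) (auto simp: path_algebra_def)
    finally show "f \<in> kspan (basis_elt K ` {p. is_path G p \<and> path_len p \<le> n})" .
  qed
  then show False using nf finite_paths[OF G] by (auto simp: path_algebra_fin_dim_def fin_dim_def)
qed

lemma many_paths:
  fixes K :: "'k::field itself"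
  assumes G: "fin_digraph G" and nf: "\<not> path_algebra_fin_dim K G"
  shows "n + 1 \<le> card {p. is_path G p \<and> path_len p \<le> n}"
proof -
  obtain p where p: "is_path G p" "path_len p \<ge> n" using not_fin_dim_long_paths[OF G nf] by blast
  have sub: "(pre p) ` {..n} \<subseteq> {p. is_path G p \<and> path_len p \<le> n}"
    using is_path_pre[OF p(1)] by (auto simp: path_len_def pre_def)
  have "inj_on (pre p) {..n}"
  proof (rule inj_onI)
    fix i j assume "i \<in> {..n}" "j \<in> {..n}" "pre p i = pre p j"
    then have "length (snd (pre p i)) = length (snd (pre p j))" "i \<le> length (snd p)" "j \<le> length (snd p)"
      using p(2) by (auto simp: path_len_def)
    then show "i = j" by (simp add: len_pre)
  qed
  then have "card ((pre p) ` {..n}) = n + 1" by (simp add: card_image)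
  then show ?thesis using card_mono[OF finite_paths[OF G] sub] by simp
qed

lemma ln_nat_nonneg: "0 \<le> ln (real (m::nat))"
  by (cases "m = 0") auto

lemma ln_nat_mono: "(m::nat) \<le> M \<Longrightarrow> 1 \<le> M \<Longrightarrow> ln (real m) \<le> ln (real M)"
  by (cases "m = 0") auto

lemma ln_over_ln_at_top: "filterlim (\<lambda>n::nat. ln (real n)) at_infinity sequentially"
  by (rule filterlim_at_top_imp_at_infinity, rule filterlim_compose[OF ln_at_top filterlim_real_sequentially])

lemma limsup_of_lim0:
  assumes "(f \<longlongrightarrow> 0) sequentially"
  shows "limsup (\<lambda>n. ereal (f n)) = 0"
proof -
  have "((\<lambda>n. ereal (f n)) \<longlongrightarrow> ereal 0) sequentially" using assms by simp
  then have "limsup (\<lambda>n. ereal (f n)) = ereal 0" by (intro lim_imp_Limsup) simp_all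
  then show ?thesis by (simp add: zero_ereal_def)
qed

lemma limsup_bounded_dim:
  fixes d :: "nat \<Rightarrow> nat"
  assumes "\<And>n. d n \<le> C"
  shows "limsup (\<lambda>n. ereal (ln (real (d n)) / ln (real n))) = 0"
proof (rule limsup_of_lim0)
  have lim0: "(\<lambda>n. ln (real (C + 1)) / ln (real n)) \<longlonglongrightarrow> 0"
    by (rule tendsto_divide_0[OF tendsto_const ln_over_ln_at_top])
  show "(\<lambda>n. ln (real (d n)) / ln (real n)) \<longlonglongrightarrow> 0"
  proof (rule tendsto_sandwich[OF _ _ tendsto_const lim0])
    show "eventually (\<lambda>n. 0 \<le> ln (real (d n)) / ln (real n)) sequentially"
      by (intro always_eventually allI divide_nonneg_nonneg ln_nat_nonneg)
    show "eventually (\<lambda>n. ln (real (d n)) / ln (real n) \<le> ln (real (C + 1)) / ln (real n)) sequentially"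
    proof (rule eventually_sequentiallyI[of 2])
      fix n :: nat assume n: "2 \<le> n"
      have "0 < ln (real n)" using n by simp
      moreover have "ln (real (d n)) \<le> ln (real (C + 1))"
        using assms[of n] by (intro ln_nat_mono) auto
      ultimately show "ln (real (d n)) / ln (real n) \<le> ln (real (C + 1)) / ln (real n)"
        by (simp add: divide_right_mono)
    qed
  qed
qed

lemma limsup_lower:
  fixes d :: "nat \<Rightarrow> nat"
  assumes k: "k \<ge> 1" and mono: "\<And>a b. a \<le> b \<Longrightarrow> d a \<le> d b"
    and low: "\<And>n. n + 1 \<le> d (k * (n + 1))"
  shows "ereal (1/2) \<le> limsup (\<lambda>n. ereal (ln (real (d n)) / ln (real n)))"
proof (rule le_Limsup)
  show "sequentially \<noteq> bot" by simp
  show "eventually (\<lambda>m. ereal (1/2) \<le> ereal (ln (real (d m)) / ln (real m))) sequentially"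
  proof (rule eventually_sequentiallyI[of "4 * k * k + 2"])
    fix m assume m: "4 * k * k + 2 \<le> m"
    have dm: "m div k \<le> d m"
    proof (cases "m div k = 0")
      case False
      then have "m div k - 1 + 1 \<le> d (k * (m div k - 1 + 1))" using low by blast
      moreover have "k * (m div k - 1 + 1) \<le> m" using False by simp
      ultimately show ?thesis using mono False by (metis Suc_eq_plus1 Suc_pred' le_trans not_gr_zero)
    qed simp
    have kpos: "real k > 0" using k by simp
    have r1: "real m / real k - 1 \<le> real (m div k)"
    proof -
      have "m < k * (m div k + 1)" using k
        by (metis add.commute div_mult_mod_eq mod_less_divisor mult.commute nat_add_left_cancel_less
            distrib_left mult_1_right le_less_trans less_one not_less)
      then have "real m < real k * (real (m div k) + 1)" by (metis of_nat_add of_nat_less_iff of_nat_mult of_nat_1)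
      then have "real m / real k < real (m div k) + 1" using kpos by (simp add: divide_less_eq mult.commute)
      then show ?thesis by simp
    qed
    define s where "s = sqrt (real m)"
    have s0: "s \<ge> 0" by (simp add: s_def)
    have ss: "s * s = real m" by (simp add: s_def)
    have "real (4 * k * k) \<le> real m" using m by linarith
    then have "(2 * real k)\<^sup>2 \<le> real m" by (simp add: power2_eq_square)
    then have s2k: "2 * real k \<le> s" unfolding s_def by (rule real_le_rsqrt)
    have s1: "1 \<le> s" using s2k k by simp
    have "2 * real k * s \<le> s * s" using s2k s0 by (simp add: mult_right_mono)
    then have "2 * s \<le> real m / real k" using kpos ss by (simp add: le_divide_eq algebra_simps)
    then have "s \<le> real (m div k)" using r1 s1 by linarith
    then have sd: "s \<le> real (d m)" using dm by (meson le_trans of_nat_le_iff order.trans)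
    have spos: "0 < s" using s1 by simp
    have "ln (real m) / 2 = ln s" unfolding s_def by (simp add: ln_sqrt)
    also have "\<dots> \<le> ln (real (d m))" using sd spos by simp
    finally have "ln (real m) / 2 \<le> ln (real (d m))" .
    moreover have "0 < ln (real m)" using m by simp
    ultimately have "1/2 \<le> ln (real (d m)) / ln (real m)" by (simp add: le_divide_eq)
    then show "ereal (1/2) \<le> ereal (ln (real (d m)) / ln (real m))" by simp
  qed
qed

lemma limsup_h:
  fixes d q :: "nat \<Rightarrow> nat"
  assumes k: "k \<ge> 1" and fin: "limsup (\<lambda>n. ereal (ln (real (d n)) / ln (real n))) < \<infinity>"
    and qd: "\<And>n. q n \<le> d (k * (n + 1))"
  shows "limsup (\<lambda>n. ereal (ln (real (q n)) / real n)) = 0"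
proof (rule limsup_of_lim0)
  obtain N :: nat where N: "limsup (\<lambda>n. ereal (ln (real (d n)) / ln (real n))) < ereal (real N)"
    using fin less_PInf_Ex_of_nat by auto
  define D where "D = real N + 1"
  have D1: "D \<ge> 1" by (simp add: D_def)
  have "limsup (\<lambda>n. ereal (ln (real (d n)) / ln (real n))) < ereal D" using N
    by (rule order.strict_trans2) (simp add: D_def)
  then have "eventually (\<lambda>m. ereal (ln (real (d m)) / ln (real m)) < ereal D) sequentially"
    by (rule Limsup_lessD)
  then obtain M where M: "\<And>m. m \<ge> M \<Longrightarrow> ln (real (d m)) / ln (real m) < D"
    by (auto simp: eventually_sequentially)
  have kpos: "real k > 0" using k by simp
  have lim: "(\<lambda>n. D * (ln (real k) / real n + ln (real n + 1) / real n)) \<longlonglongrightarrow> 0"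
  proof -
    have a: "(\<lambda>n. ln (real k) / real n) \<longlonglongrightarrow> 0"
      by (rule tendsto_divide_0[OF tendsto_const])
        (rule filterlim_at_top_imp_at_infinity, rule filterlim_real_sequentially)
    have b: "(\<lambda>n::nat. ln (real n + 1) / real n) \<longlonglongrightarrow> 0" by real_asymp
    show ?thesis using tendsto_mult_right_zero[OF tendsto_add_zero[OF a b], of D] by simp
  qed
  show "(\<lambda>n. ln (real (q n)) / real n) \<longlonglongrightarrow> 0"
  proof (rule tendsto_sandwich[OF _ _ tendsto_const lim])
    show "eventually (\<lambda>n. 0 \<le> ln (real (q n)) / real n) sequentially"
      by (intro always_eventually allI divide_nonneg_nonneg ln_nat_nonneg) simp
    show "eventually (\<lambda>n. ln (real (q n)) / real n \<le> D * (ln (real k) / real n + ln (real n + 1) / real n)) sequentially"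
    proof (rule eventually_sequentiallyI[of "M + 2"])
      fix n assume n: "M + 2 \<le> n"
      let ?m = "k * (n + 1)"
      have nk: "1 * (n + 1) \<le> ?m" using k by (rule mult_le_mono1)
      have mM: "?m \<ge> M" "?m \<ge> 2" using n nk by simp_all
      have "1 < ?m" using mM(2) by linarith
      then have "(1::real) < real ?m" by (metis of_nat_1 of_nat_less_iff)
      then have lnm: "0 < ln (real ?m)" by (rule ln_gt_zero)
      have "ln (real (d ?m)) / ln (real ?m) < D" using M mM(1) by blast
      then have dlt: "ln (real (d ?m)) < D * ln (real ?m)" using lnm by (simp add: divide_less_eq)
      have "ln (real (q n)) \<le> D * ln (real ?m)"
      proof (cases "q n = 0")
        case True then show ?thesis using D1 lnm by simp
      next
        case False
        then have "ln (real (q n)) \<le> ln (real (d ?m))" using qd[of n] by (intro ln_nat_mono) auto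
        then show ?thesis using dlt by simp
      qed
      also have "ln (real ?m) = ln (real k) + ln (real n + 1)"
      proof -
        have e: "real ?m = real k * (real n + 1)" by (simp add: algebra_simps)
        have l: "ln (real k * (real n + 1)) = ln (real k) + ln (real n + 1)"
          using kpos by (simp add: ln_mult)
        show ?thesis by (subst e) (rule l)
      qed
      finally have "ln (real (q n)) \<le> D * (ln (real k) + ln (real n + 1))" .
      moreover have "real n > 0" using n by simp
      ultimately show "ln (real (q n)) / real n \<le> D * (ln (real k) / real n + ln (real n + 1) / real n)"
        by (simp add: divide_right_mono add_divide_distrib[symmetric] mult.commute)
    qed
  qed
qed

theorem theorem5p13:
  fixes G :: "('v,'e) pre_digraph"
  assumes "fin_digraph G"
  shows "(GKdim TYPE('k::field) G = 0 \<longleftrightarrow> path_algebra_fin_dim TYPE('k) G)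
    \<and> (GKdim TYPE('k) G \<noteq> 0 \<and> GKdim TYPE('k) G < \<infinity>
         \<longrightarrow> h_alg TYPE('k) G = 0 \<and> \<not> path_algebra_fin_dim TYPE('k) G)"
proof -
  define V where "V = (SOME V. fd_generating TYPE('k) G V)"
  have fd: "fd_generating TYPE('k) G V"
    unfolding V_def using exists_fd_gen[OF assms] by (rule someI_ex)
  define d where "d n = kdim (subspace_pow TYPE('k) G V n)" for n
  have GK: "GKdim TYPE('k) G = limsup (\<lambda>n. ereal (ln (real (d n)) / ln (real n)))"
    by (simp add: GKdim_def GK_wrt_def d_def V_def)
  show ?thesis
  proof (cases "path_algebra_fin_dim TYPE('k) G")
    case True
    then obtain B where B: "finite B" "path_algebra TYPE('k) G \<subseteq> kspan B"
      by (auto simp: path_algebra_fin_dim_def fin_dim_def)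
    have "d n \<le> card B" for n
    proof -
      have "subspace_pow TYPE('k) G V n \<subseteq> path_algebra TYPE('k) G"
        using fd by (auto simp: fd_generating_def)
      then show ?thesis unfolding d_def using B by (intro ps.dim_le_card) auto
    qed
    then have "GKdim TYPE('k) G = 0" unfolding GK by (rule limsup_bounded_dim)
    then show ?thesis using True by simp
  next
    case False
    obtain k where k: "k \<ge> 1"
      and dl: "\<And>p. is_path G p \<Longrightarrow> basis_elt TYPE('k) p \<in> subspace_pow TYPE('k) G V (k * (path_len p + 1))"
      using gen_bound[OF assms fd] by blast
    have fins: "\<exists>F. finite F \<and> subspace_pow TYPE('k) G V m \<subseteq> kspan F" for m
      using spow_fin[OF assms fd] .
    have mono: "d a \<le> d b" if "a \<le> b" for a b
    proof -
      obtain F where F: "finite F" "subspace_pow TYPE('k) G V b \<subseteq> kspan F" using fins by blast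
      have "subspace_pow TYPE('k) G V a \<subseteq> kspan (subspace_pow TYPE('k) G V b)"
        using spow_mono[OF that] ps.span_superset by blast
      then show ?thesis unfolding d_def using F by (intro dim_mono_fin) auto
    qed
    have SF: "std_filt TYPE('k) G n \<subseteq> subspace_pow TYPE('k) G V (k * (n + 1))" for n
      unfolding std_filt_def
    proof (rule ps.span_minimal[OF _ spow_subspace])
      show "{basis_elt TYPE('k) p |p. is_path G p \<and> path_len p \<le> n} \<subseteq> subspace_pow TYPE('k) G V (k * (n + 1))"
      proof
        fix x assume "x \<in> {basis_elt TYPE('k) p |p. is_path G p \<and> path_len p \<le> n}"
        then obtain p where p: "x = basis_elt TYPE('k) p" "is_path G p" "path_len p \<le> n" by blast
        have "k * (path_len p + 1) \<le> k * (n + 1)" using p(3) by simp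
        then show "x \<in> subspace_pow TYPE('k) G V (k * (n + 1))" using dl[OF p(2)] spow_mono p(1) by blast
      qed
    qed
    have SF2: "std_filt TYPE('k) G n \<subseteq> kspan (subspace_pow TYPE('k) G V (k * (n + 1)))" for n
      using SF[of n] ps.span_superset by blast
    have low: "n + 1 \<le> d (k * (n + 1))" for n
    proof -
      let ?Q = "{p. is_path G p \<and> path_len p \<le> n}"
      have "n + 1 \<le> card ?Q" by (rule many_paths[OF assms False])
      also have "card ?Q = card (basis_elt TYPE('k) ` ?Q)"
        by (simp add: card_image inj_on_subset[OF delta_inj])
      also have "\<dots> \<le> d (k * (n + 1))"
      proof -
        obtain F where F: "finite F" "subspace_pow TYPE('k) G V (k * (n + 1)) \<subseteq> kspan F" using fins by blast
        have "basis_elt TYPE('k) ` ?Q \<subseteq> std_filt TYPE('k) G n"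
          unfolding std_filt_def by (rule subset_trans[OF _ ps.span_superset]) blast
        then have "basis_elt TYPE('k) ` ?Q \<subseteq> kspan (subspace_pow TYPE('k) G V (k * (n + 1)))"
          using SF2[of n] by blast
        then show ?thesis unfolding d_def
          by (rule indep_le_dim[OF delta_indep[OF finite_paths[OF assms]] _ F(2) F(1)])
      qed
      finally show ?thesis .
    qed
    have "ereal (1/2) \<le> GKdim TYPE('k) G" unfolding GK by (rule limsup_lower[OF k mono low])
    then have GK0: "GKdim TYPE('k) G \<noteq> 0" by (auto simp: zero_ereal_def)
    have fq: "filt_quot_dim TYPE('k) G n \<le> d (k * (n + 1))" for n
    proof -
      have "filt_quot_dim TYPE('k) G n \<le> kdim (std_filt TYPE('k) G n)" by (simp add: filt_quot_dim_def)
      also have "\<dots> \<le> d (k * (n + 1))"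
      proof -
        obtain F where F: "finite F" "subspace_pow TYPE('k) G V (k * (n + 1)) \<subseteq> kspan F" using fins by blast
        show ?thesis unfolding d_def by (rule dim_mono_fin[OF SF2 F(2) F(1)])
      qed
      finally show ?thesis .
    qed
    have "h_alg TYPE('k) G = 0" if "GKdim TYPE('k) G < \<infinity>"
      using limsup_h[where d=d and q="filt_quot_dim TYPE('k) G", OF k _ fq] that False
      unfolding GK h_alg_def by simp
    then show ?thesis using False GK0 by auto
  qed
qed

end
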